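(* Let $n\ge 1$, let $k$ be an even positive divisor of $n$, and let $A$ be a subgroup of $(\mathbb{Z}/n\mathbb{Z})^\times$ such that $$A=\{jn/k+1 \bmod n : j\in J_+\}\cup\{jn/k-1 \bmod n: j\in J_-\}$$ for subsets $J_+,J_-\subseteq\{0,1,\dots,k-1\}$ with $J_-=\{k/2-j \bmod k : j\in J_+\}$. Let $r\in\mathbb{Z}/n\mathbb{Z}$ (represented by an integer) and $X=Ar$. (i) If $r$ is even, then $\sigma_X(y)\in\mathbb{R}$ for all $y\in\mathbb{Z}/n\mathbb{Z}$. (ii) If $r$ is odd, then $\sigma_X(y)$ is real whenever $y$ is even and purely imaginary whenever $y$ is odd (parity of $y$ being well defined since $n$ is even).
   Context: Write $e(\theta)=\exp(2\pi i\theta)$. For a subgroup $A$ of $(\mathbb{Z}/n\mathbb{Z})^\times$ and $r\in\mathbb{Z}/n\mathbb{Z}$, let $X=Ar=\{ar:a\in A\}$ and $\sigma_X(y)=\sum_{x\in X}e\left(\frac{xy}{n}\right)$ for $y\in\mathbb{Z}/n\mathbb{Z}$. *)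

theory Defs
  imports Complex_Main
begin

text \<open>Residues modulo n are represented by integers in {0..<n}.\<close>

definition ee :: "real \<Rightarrow> complex" where
  "ee \<theta> = exp (2 * of_real pi * \<i> * of_real \<theta>)"

definition units_mod :: "int \<Rightarrow> int set" where
  "units_mod n = {a. 0 \<le> a \<and> a < n \<and> coprime a n}"

definition unit_subgroup :: "int \<Rightarrow> int set \<Rightarrow> bool" where
  "unit_subgroup n A \<longleftrightarrow> A \<subseteq> units_mod n \<and> 1 mod n \<in> A
     \<and> (\<forall>a\<in>A. \<forall>b\<in>A. (a * b) mod n \<in> A)
     \<and> (\<forall>a\<in>A. \<exists>b\<in>A. (a * b) mod n = 1 mod n)"

definition orbit_set :: "int \<Rightarrow> int set \<Rightarrow> int \<Rightarrow> int set" where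
  "orbit_set n A r = (\<lambda>a. (a * r) mod n) ` A"

definition sigma :: "int \<Rightarrow> int set \<Rightarrow> int \<Rightarrow> complex" where
  "sigma n X y = (\<Sum>x\<in>X. ee (real_of_int (x * y) / real_of_int n))"

end

theory Submission
  imports Defs
begin

lemma ee_cis: "ee t = cis (2 * pi * t)"
  by (simp add: ee_def cis_conv_exp mult_ac)

lemma ee_add: "ee (a + b) = ee a * ee b"
  by (simp add: ee_cis cis_mult distrib_left)

lemma ee_int: "ee (real_of_int z) = 1"
  by (simp add: ee_cis)

lemma ee_cnj: "cnj (ee t) = ee (- t)"
  by (simp add: ee_cis cis_cnj)

lemma ee_half_even: "even (z::int) \<Longrightarrow> ee (real_of_int z / 2) = 1"
proof -
  assume "even z" then obtain q where "z = 2 * q" by blast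
  then have "real_of_int z / 2 = real_of_int q" by simp
  then show ?thesis by (simp add: ee_int)
qed

lemma ee_half_odd: "odd (z::int) \<Longrightarrow> ee (real_of_int z / 2) = -1"
proof -
  assume "odd z" then obtain q where "z = 2 * q + 1" by (metis oddE)
  then have "real_of_int z / 2 = real_of_int q + 1/2" by simp
  then have "ee (real_of_int z / 2) = ee (real_of_int q) * ee (1/2)" by (subst \<open>real_of_int z / 2 = _\<close>) (rule ee_add)
  also have "\<dots> = -1" by (simp add: ee_int ee_cis)
  finally show ?thesis .
qed

theorem proposition4p1:
  fixes n k r :: int and A Jp Jm :: "int set"
  assumes "n \<ge> 1" and "k > 0" and "even k" and "k dvd n"
    and "unit_subgroup n A"
    and "Jp \<subseteq> {0..<k}" and "Jm \<subseteq> {0..<k}"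
    and "Jm = {(k div 2 - j) mod k | j. j \<in> Jp}"
    and "A = {(j * (n div k) + 1) mod n | j. j \<in> Jp} \<union> {(j * (n div k) - 1) mod n | j. j \<in> Jm}"
  shows "(even r \<longrightarrow> (\<forall>y. sigma n (orbit_set n A r) y \<in> \<real>))
       \<and> (odd r \<longrightarrow> (\<forall>y. (even y \<longrightarrow> sigma n (orbit_set n A r) y \<in> \<real>)
                         \<and> (odd y \<longrightarrow> Re (sigma n (orbit_set n A r) y) = 0)))"
proof -
  define m where "m = n div k"
  define h where "h = k div 2"
  have nkm: "n = k * m" using assms(4) by (simp add: m_def)
  have kh: "k = 2 * h" using assms(3) by (simp add: h_def)
  have nh: "n div 2 = h * m" using nkm kh by simp
  have phiA: "(n div 2 - a) mod n \<in> A" if "a \<in> A" for a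
  proof -
    from that assms(9) consider (p) j where "j \<in> Jp" "a = (j * m + 1) mod n"
      | (q) j where "j \<in> Jm" "a = (j * m - 1) mod n" unfolding m_def by blast
    then show ?thesis
    proof cases
      case p
      define j' where "j' = (h - j) mod k"
      have j'm: "j' \<in> Jm" using assms(8) p(1) unfolding j'_def h_def by blast
      have "k dvd (h - j) - j'" unfolding j'_def by (simp add: mod_eq_dvd_iff[symmetric])
      then obtain t where t: "(h - j) - j' = k * t" by blast
      have "(j' * m - 1) mod n = (n div 2 - a) mod n"
      proof -
        have "(j' * m - 1) mod n = (h * m - (j * m + 1)) mod n"
          apply (subst mod_eq_dvd_iff)
        proof -
          have "j' * m - 1 - (h * m - (j * m + 1)) = - (((h - j) - j') * m)" by (simp add: algebra_simps)
          also have "\<dots> = n * (- t)" using t nkm by (simp add: algebra_simps)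
          finally show "n dvd j' * m - 1 - (h * m - (j * m + 1))" by simp
        qed
        also have "\<dots> = (n div 2 - a) mod n" using p(2) nh by (simp add: mod_diff_right_eq)
        finally show ?thesis .
      qed
      note eqj = this
      have "(n div 2 - a) mod n \<in> {(j * m - 1) mod n |j. j \<in> Jm}" apply (rule CollectI, rule exI[of _ j']) using j'm eqj by simp
      then show ?thesis unfolding assms(9) m_def by blast
    next
      case q
      from q(1) assms(8) obtain i where i: "i \<in> Jp" "j = (h - i) mod k"
        unfolding h_def by blast
      have "k dvd (h - i) - j" using i(2) by (simp add: mod_eq_dvd_iff[symmetric])
      then obtain t where t: "(h - i) - j = k * t" by blast
      have "(i * m + 1) mod n = (n div 2 - a) mod n"
      proof -
        have "(i * m + 1) mod n = (h * m - (j * m - 1)) mod n"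
          apply (subst mod_eq_dvd_iff)
        proof -
          have "i * m + 1 - (h * m - (j * m - 1)) = - (((h - i) - j) * m)" by (simp add: algebra_simps)
          also have "\<dots> = n * (- t)" using t nkm by (simp add: algebra_simps)
          finally show "n dvd i * m + 1 - (h * m - (j * m - 1))" by simp
        qed
        also have "\<dots> = (n div 2 - a) mod n" using q(2) nh by (simp add: mod_diff_right_eq)
        finally show ?thesis .
      qed
      note eqi = this
      have "(n div 2 - a) mod n \<in> {(j * m + 1) mod n |j. j \<in> Jp}" apply (rule CollectI, rule exI[of _ i]) using i(1) eqi by simp
      then show ?thesis unfolding assms(9) m_def by blast
    qed
  qed
  define X where "X = orbit_set n A r"
  define c where "c = (n div 2) * r"
  define \<psi> where "\<psi> x = (c - x) mod n" for x
  have psiX: "\<psi> x \<in> X" if "x \<in> X" for x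
  proof -
    from that obtain a where a: "a \<in> A" "x = (a * r) mod n" unfolding X_def orbit_set_def by blast
    have "\<psi> x = ((n div 2 - a) mod n * r) mod n"
      unfolding \<psi>_def a(2) c_def by (simp add: mod_diff_right_eq mod_mult_left_eq left_diff_distrib)
    then show ?thesis using phiA[OF a(1)] unfolding X_def orbit_set_def by blast
  qed
  have psipsi: "\<psi> (\<psi> x) = x" if "x \<in> X" for x
  proof -
    from that obtain a where a: "x = (a * r) mod n" unfolding X_def orbit_set_def by blast
    have "\<psi> (\<psi> x) = x mod n" unfolding \<psi>_def by (simp add: mod_diff_right_eq)
    then show ?thesis using a by simp
  qed
  have nev: "even n" using nkm kh by simp
  have n0: "real_of_int n \<noteq> 0" using assms(1) by simp
  have main: "sigma n X y = ee (real_of_int (r * y) / 2) * cnj (sigma n X y)" for y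
  proof -
    let ?g = "\<lambda>x. ee (real_of_int (x * y) / real_of_int n)"
    have "sigma n X y = (\<Sum>x\<in>X. ?g (\<psi> x))"
      unfolding sigma_def
      by (rule sum.reindex_bij_witness[where i=\<psi> and j=\<psi>]) (auto simp: psiX psipsi)
    also have "\<dots> = (\<Sum>x\<in>X. ee (real_of_int (r * y) / 2) * ee (- (real_of_int (x * y) / real_of_int n)))"
    proof (rule sum.cong[OF refl])
      fix x assume "x \<in> X"
      define q where "q = (c - x) div n"
      have px: "\<psi> x = c - x - n * q" unfolding \<psi>_def q_def by (simp add: minus_div_mult_eq_mod[symmetric] mult.commute)
      have hc: "real_of_int (c * y) / real_of_int n = real_of_int (r * y) / 2"
      proof -
        from nev obtain n2 where "n = 2 * n2" by blast
        then show ?thesis using n0 unfolding c_def by (simp add: field_simps)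
      qed
      have "real_of_int (\<psi> x * y) / real_of_int n
          = (real_of_int (r * y) / 2 + (- (real_of_int (x * y) / real_of_int n))) + real_of_int (- (q * y))"
        using n0 hc[symmetric] unfolding px by (simp add: field_simps) (metis mult.commute)
      then show "?g (\<psi> x) = ee (real_of_int (r * y) / 2) * ee (- (real_of_int (x * y) / real_of_int n))"
        by (simp only: ee_add ee_int mult_1_right)
    qed
    also have "\<dots> = ee (real_of_int (r * y) / 2) * cnj (sigma n X y)"
      unfolding sigma_def by (simp add: sum_distrib_left ee_cnj)
    finally show ?thesis .
  qed
  have real: "sigma n X y \<in> \<real>" if "even (r * y)" for y
    using main[of y] ee_half_even[OF that] by (simp add: Reals_cnj_iff)
  have imag: "Re (sigma n X y) = 0" if "odd (r * y)" for y
  proof -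
    have "sigma n X y = - cnj (sigma n X y)" using main[of y] ee_half_odd[OF that] by simp
    note eqs = this
    have "Re (sigma n X y) = - Re (sigma n X y)" using arg_cong[OF eqs, of Re] by simp
    then show ?thesis by simp
  qed
  show ?thesis unfolding X_def[symmetric] using real imag by auto
qed

end
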